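(* Let $d\ge1$ and let $\mu:\mathbb{R}^d\to(0,\infty)$ be localized to the unit ball with $\sum_{a\in\mathbb{Z}^d}\mu(x-a)=1$ and $\mu(x)\ge c(1+|x|)^{-10d}$ for some $c>0$. Then there exists $C>0$ such that for every Schwartz function $K\in\mathcal{S}(\mathbb{R}^d)$, every $B\subset\mathbb{Z}^d$ and every $x\in\mathbb{R}^d$, \[ |K*\mu_B(x)|\le C\left(\int|K(y)|(1+|y|^{10d})\,dy\right)\mu_B(x). \]
   Context: A bounded function $f$ on $\mathbb{R}^d$ is localized to the unit ball if there is a constant $C$ with $|f(x)|\le C$, $|f(x)|\le C|x|^{-10d}$ and $|\nabla f(x)|\le C|x|^{-10d-1}$. $\mu_a(x)=\mu(x-a)$ and $\mu_B=\sum_{b\in B}\mu_b$. *)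

theory Defs
  imports "HOL-Analysis.Analysis"
begin

definition int_lattice :: "'a::euclidean_space set" where
  "int_lattice = {x. \<forall>i\<in>Basis. x \<bullet> i \<in> \<int>}"

text \<open>f is localized to the unit ball: bounded, |f x| <= C |x|^(-10d) and
  |grad f x| <= C |x|^(-10d-1) (the latter two for x /= 0, where the right-hand
  sides are finite).\<close>
definition localized_unit_ball :: "('a::euclidean_space \<Rightarrow> real) \<Rightarrow> bool" where
  "localized_unit_ball f \<longleftrightarrow>
     (\<exists>C. \<forall>x. \<bar>f x\<bar> \<le> C \<and>
        (x \<noteq> 0 \<longrightarrow> \<bar>f x\<bar> \<le> C * norm x powr (- real (10 * DIM('a)))) \<and>
        (x \<noteq> 0 \<longrightarrow> (\<exists>g. (f has_derivative (\<lambda>h. g \<bullet> h)) (at x) \<and>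
                         norm g \<le> C * norm x powr (- real (10 * DIM('a)) - 1))))"

definition mu_set :: "('a::euclidean_space \<Rightarrow> real) \<Rightarrow> 'a set \<Rightarrow> 'a \<Rightarrow> real" where
  "mu_set \<mu> B x = (\<Sum>\<^sub>\<infinity>b\<in>B. \<mu> (x - b))"

text \<open>Schwartz functions: smooth, and every partial derivative of every order
  (including order 0) decays faster than any power of (1+|x|).\<close>
coinductive schwartz :: "('a::euclidean_space \<Rightarrow> complex) \<Rightarrow> bool" where
  "(\<And>N::nat. \<exists>M. \<forall>x. (1 + norm x) ^ N * norm (f x) \<le> M) \<Longrightarrow>
   (\<And>x. (f has_derivative (\<lambda>h. \<Sum>i\<in>Basis. (h \<bullet> i) *\<^sub>R g i x)) (at x)) \<Longrightarrow>
   (\<And>i. i \<in> Basis \<Longrightarrow> schwartz (g i)) \<Longrightarrow> schwartz f"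

definition conv :: "('a::euclidean_space \<Rightarrow> complex) \<Rightarrow> ('a \<Rightarrow> real) \<Rightarrow> 'a \<Rightarrow> complex" where
  "conv K u x = (\<integral>y. K y * complex_of_real (u (x - y)) \<partial>lborel)"

end

theory Submission
  imports Defs
begin

lemma ennreal_le_suminf: "(f::nat \<Rightarrow> ennreal) k \<le> suminf f"
  using sum_le_suminf[of f "{k}"] by simp

lemma decay_integrable:
  "integrable lborel (\<lambda>y::'a::euclidean_space. inverse ((1 + norm y) ^ (DIM('a) + 2)))"
proof (rule integrableI_bounded)
  let ?d = "DIM('a)"
  define V where "V = unit_ball_vol (real ?d)"
  have V: "V \<ge> 0" unfolding V_def by simp
  show "(\<lambda>y::'a. inverse ((1 + norm y) ^ (?d + 2))) \<in> borel_measurable lborel"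
    unfolding measurable_lborel2
    by (intro borel_measurable_continuous_onI continuous_intros) (auto, smt (verit) norm_ge_zero)
  define t where "t k = inverse ((1 + real k) ^ (?d + 2))" for k :: nat
  have pt: "ennreal (norm (inverse ((1 + norm y) ^ (?d + 2))))
      \<le> (\<Sum>k. ennreal (t k) * indicator (cball (0::'a) (real k + 1)) y)" for y :: 'a
  proof -
    define k where "k = nat \<lfloor>norm y\<rfloor>"
    have f0: "0 \<le> \<lfloor>norm y\<rfloor>" by simp
    have kk: "real k = of_int \<lfloor>norm y\<rfloor>" unfolding k_def using f0 by simp
    have k1: "real k \<le> norm y" using kk of_int_floor_le[of "norm y"] by linarith
    have k2: "norm y \<le> real k + 1" using kk real_of_int_floor_add_one_ge[of "norm y"] by linarith
    have "norm (inverse ((1 + norm y) ^ (?d + 2))) \<le> t k"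
    proof -
      have p: "(1 + real k) ^ (?d + 2) \<le> (1 + norm y) ^ (?d + 2)"
        using k1 by (intro power_mono) auto
      have q: "0 < (1 + real k) ^ (?d + 2)" by simp
      have r: "0 < (1 + norm y) ^ (?d + 2)" by (smt (verit) norm_ge_zero zero_less_power)
      show ?thesis unfolding t_def using le_imp_inverse_le[OF p q] r by simp
    qed
    hence "ennreal (norm (inverse ((1 + norm y) ^ (?d + 2)))) \<le> ennreal (t k) * indicator (cball (0::'a) (real k + 1)) y"
      using k2 by (simp add: indicator_def del: norm_inverse power_Suc inverse_mult_distrib) (rule ennreal_leI)
    also have "\<dots> \<le> (\<Sum>k. ennreal (t k) * indicator (cball (0::'a) (real k + 1)) y)"
      by (rule ennreal_le_suminf)
    finally show ?thesis .
  qed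
  have "(\<integral>\<^sup>+ (y::'a). ennreal (norm (inverse ((1 + norm y) ^ (?d + 2)))) \<partial>lborel)
     \<le> (\<integral>\<^sup>+ y. (\<Sum>k. ennreal (t k) * indicator (cball (0::'a) (real k + 1)) y) \<partial>lborel)"
    by (rule nn_integral_mono) (rule pt)
  also have "\<dots> = (\<Sum>k. \<integral>\<^sup>+ y. ennreal (t k) * indicator (cball (0::'a) (real k + 1)) y \<partial>lborel)"
    by (rule nn_integral_suminf) (intro borel_measurable_times_ennreal borel_measurable_indicator; simp)
  also have "\<dots> = (\<Sum>k. ennreal (V * (t k * (real k + 1) ^ ?d)))"
  proof (rule suminf_cong)
    fix k
    have "(\<integral>\<^sup>+ y. ennreal (t k) * indicator (cball (0::'a) (real k + 1)) y \<partial>lborel)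
        = ennreal (t k) * emeasure lborel (cball (0::'a) (real k + 1))"
      by (subst nn_integral_cmult_indicator) auto
    also have "\<dots> = ennreal (V * (t k * (real k + 1) ^ ?d))"
      by (subst emeasure_cball) (auto simp: V_def t_def ennreal_mult'[symmetric] mult_ac)
    finally show "(\<integral>\<^sup>+ y. ennreal (t k) * indicator (cball (0::'a) (real k + 1)) y \<partial>lborel)
        = ennreal (V * (t k * (real k + 1) ^ ?d))" .
  qed
  also have "\<dots> = (\<Sum>k. ennreal (V * inverse (real (Suc k) ^ 2)))"
  proof (rule suminf_cong)
    fix k
    have "t k * (real k + 1) ^ ?d = inverse (real (Suc k) ^ 2)"
    proof -
      define a where "a = 1 + real k"
      have a: "a > 0" unfolding a_def by simp
      have "t k * (real k + 1) ^ ?d = inverse (a ^ ?d * a ^ 2) * a ^ ?d"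
        unfolding t_def a_def by (metis add.commute power_add)
      also have "\<dots> = inverse (a ^ 2)" using a by (simp add: power2_eq_square)
      finally show ?thesis unfolding a_def by (simp only: of_nat_Suc)
    qed
    thus "ennreal (V * (t k * (real k + 1) ^ ?d)) = ennreal (V * inverse (real (Suc k) ^ 2))"
      by simp
  qed
  also have "\<dots> = ennreal (\<Sum>k. V * inverse (real (Suc k) ^ 2))"
  proof (rule suminf_ennreal2)
    show "summable (\<lambda>k. V * inverse (real (Suc k) ^ 2))"
    proof (rule summable_mult)
      show "summable (\<lambda>k. inverse (real (Suc k) ^ 2))"
        using summable_Suc_iff[of "\<lambda>n. inverse (real n ^ 2)"] inverse_power_summable[of 2, where 'a=real]
        by (simp only:)
    qed
  qed (use V in auto)
  also have "\<dots> < \<infinity>" by simp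
  finally show "(\<integral>\<^sup>+ (y::'a). ennreal (norm (inverse ((1 + norm y) ^ (?d + 2)))) \<partial>lborel) < \<infinity>" .
qed

lemma pow_bound:
  fixes t :: real assumes "t \<ge> 0"
  shows "(1 + t) ^ n \<le> 2 ^ n * (1 + t ^ n)"
proof (cases "t \<le> 1")
  case True
  have "(1 + t) ^ n \<le> 2 ^ n" using True assms by (intro power_mono) auto
  also have "\<dots> \<le> 2 ^ n * (1 + t ^ n)" using assms by simp
  finally show ?thesis .
next
  case False
  have "(1 + t) ^ n \<le> (2 * t) ^ n" using False assms by (intro power_mono) auto
  also have "\<dots> = 2 ^ n * t ^ n" by (simp add: power_mult_distrib)
  also have "\<dots> \<le> 2 ^ n * (1 + t ^ n)" by simp
  finally show ?thesis .
qed

theorem lemma1p4: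
  fixes \<mu> :: "'a::euclidean_space \<Rightarrow> real"
  assumes pos: "\<And>x. \<mu> x > 0"
    and loc: "localized_unit_ball \<mu>"
    and partition: "\<And>x. ((\<lambda>a. \<mu> (x - a)) has_sum 1) int_lattice"
    and lower: "\<exists>c>0. \<forall>x. \<mu> x \<ge> c * (1 + norm x) powr (- real (10 * DIM('a)))"
  shows "\<exists>C>0. \<forall>K B x. schwartz K \<longrightarrow> B \<subseteq> int_lattice \<longrightarrow>
           norm (conv K (mu_set \<mu> B) x)
             \<le> C * (\<integral>y. norm (K y) * (1 + norm y ^ (10 * DIM('a))) \<partial>lborel) * mu_set \<mu> B x"
proof -
  define D where "D = 10 * DIM('a)"
  obtain C where C: "\<And>x. \<bar>\<mu> x\<bar> \<le> C \<and> (x \<noteq> 0 \<longrightarrow> \<bar>\<mu> x\<bar> \<le> C * norm x powr (- real D))"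
    using loc unfolding localized_unit_ball_def D_def by blast
  obtain c where c: "c > 0" "\<And>x. \<mu> x \<ge> c * (1 + norm x) powr (- real D)"
    using lower unfolding D_def by blast
  have Cpos: "C > 0" using C[of 0] pos[of 0] by linarith
  define C2 where "C2 = C * 2 ^ D"
  have up: "\<mu> w * (1 + norm w) ^ D \<le> C2" for w
  proof (cases "norm w \<le> 1")
    case True
    have a: "(1 + norm w) ^ D \<le> 2 ^ D" using True by (intro power_mono) auto
    have b: "\<mu> w \<le> C" using C[of w] by linarith
    show ?thesis unfolding C2_def
      using mult_mono[OF b a] pos[of w] Cpos by simp
  next
    case False
    hence w0: "w \<noteq> 0" and n1: "norm w > 1" by auto
    have "\<mu> w \<le> C * norm w powr (- real D)" using C[of w] w0 by linarith
    also have "\<dots> = C / norm w ^ D"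
    proof -
      have "norm w powr real D = norm w ^ D" using n1 by (intro powr_realpow) auto
      thus ?thesis by (simp add: powr_minus divide_inverse)
    qed
    finally have b: "\<mu> w \<le> C / norm w ^ D" .
    have a: "(1 + norm w) ^ D \<le> 2 ^ D * norm w ^ D"
    proof -
      have "(1 + norm w) ^ D \<le> (2 * norm w) ^ D" using n1 by (intro power_mono) auto
      thus ?thesis by (simp add: power_mult_distrib)
    qed
    have "\<mu> w * (1 + norm w) ^ D \<le> (C / norm w ^ D) * (2 ^ D * norm w ^ D)"
      using mult_mono[OF b a] pos[of w] Cpos w0 by simp
    also have "\<dots> = C2" unfolding C2_def using n1 w0 by simp
    finally show ?thesis .
  qed
  have low: "c \<le> \<mu> z * (1 + norm z) ^ D" for z
  proof -
    have p: "(1 + norm z) ^ D > 0" by (smt (verit) norm_ge_zero zero_less_power)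
    have "(1 + norm z) powr (- real D) = inverse ((1 + norm z) ^ D)"
      by (smt (verit) norm_ge_zero powr_minus powr_realpow)
    hence "c * inverse ((1 + norm z) ^ D) \<le> \<mu> z" using c(2)[of z] by simp
    hence "c * inverse ((1 + norm z) ^ D) * (1 + norm z) ^ D \<le> \<mu> z * (1 + norm z) ^ D"
      using p by (intro mult_right_mono) auto
    moreover have "c * inverse ((1 + norm z) ^ D) * (1 + norm z) ^ D = c"
      using p by (metis less_irrefl mult.assoc mult.right_neutral left_inverse)
    ultimately show ?thesis by linarith
  qed
  define C0 where "C0 = C2 * 2 ^ D / c"
  have C0pos: "C0 > 0" unfolding C0_def C2_def using Cpos c by simp
  have key: "\<mu> (z - y) \<le> C0 * (1 + norm y ^ D) * \<mu> z" for z y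
  proof -
    define p where "p = (1 + norm (z - y)) ^ D"
    define q where "q = (1 + norm y) ^ D"
    define r where "r = (1 + norm z) ^ D"
    have p0: "p \<ge> 0" and q0: "q \<ge> 0" unfolding p_def q_def by (smt (verit) norm_ge_zero zero_le_power)+
    have "1 + norm z \<le> (1 + norm (z - y)) * (1 + norm y)"
    proof -
      have "norm z \<le> norm (z - y) + norm y" by (metis norm_triangle_sub add.commute)
      thus ?thesis by (simp add: algebra_simps) (smt (verit) norm_ge_zero mult_nonneg_nonneg)
    qed
    hence rpq: "r \<le> p * q" unfolding r_def p_def q_def
      by (metis power_mono power_mult_distrib norm_ge_zero add_nonneg_nonneg zero_le_one)
    have "c \<le> \<mu> z * r" using low[of z] unfolding r_def .
    also have "\<dots> \<le> \<mu> z * (p * q)" using rpq pos[of z] by (intro mult_left_mono) auto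
    finally have "c * \<mu> (z - y) \<le> (\<mu> z * (p * q)) * \<mu> (z - y)"
      using pos[of "z - y"] by (intro mult_right_mono) auto
    also have "\<dots> = (\<mu> (z - y) * p) * (\<mu> z * q)" by (simp add: mult_ac)
    also have "\<dots> \<le> C2 * (\<mu> z * q)"
      using up[of "z - y"] pos[of z] q0 unfolding p_def by (intro mult_right_mono) auto
    also have "\<dots> \<le> C2 * (\<mu> z * (2 ^ D * (1 + norm y ^ D)))"
      using pow_bound[of "norm y" D] pos[of z] Cpos unfolding q_def C2_def
      by (intro mult_left_mono) auto
    finally have "c * \<mu> (z - y) \<le> C2 * (\<mu> z * (2 ^ D * (1 + norm y ^ D)))" .
    hence "\<mu> (z - y) \<le> C2 * (\<mu> z * (2 ^ D * (1 + norm y ^ D))) / c"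
      using c(1) by (simp add: pos_le_divide_eq mult.commute)
    thus ?thesis unfolding C0_def by (simp add: mult_ac)
  qed
  have summ: "(\<lambda>b. \<mu> (z - b)) summable_on B" if "B \<subseteq> int_lattice" for z B
    using summable_on_subset_banach[OF has_sum_imp_summable[OF partition[of z]] that] .
  have musum: "mu_set \<mu> B (x - y) \<le> C0 * (1 + norm y ^ D) * mu_set \<mu> B x"
    if B: "B \<subseteq> int_lattice" for B x y
  proof -
    have "mu_set \<mu> B (x - y) = (\<Sum>\<^sub>\<infinity>b\<in>B. \<mu> (x - y - b))" unfolding mu_set_def ..
    also have "\<dots> \<le> (\<Sum>\<^sub>\<infinity>b\<in>B. C0 * (1 + norm y ^ D) * \<mu> (x - b))"
    proof (rule infsum_mono)
      show "(\<lambda>b. \<mu> (x - y - b)) summable_on B" using summ[OF B] .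
      show "(\<lambda>b. C0 * (1 + norm y ^ D) * \<mu> (x - b)) summable_on B"
        using summ[OF B] by (rule summable_on_cmult_right)
      show "\<mu> (x - y - b) \<le> C0 * (1 + norm y ^ D) * \<mu> (x - b)" for b
        using key[of "x - b" y] by (simp add: algebra_simps)
    qed
    also have "\<dots> = C0 * (1 + norm y ^ D) * mu_set \<mu> B x"
      unfolding mu_set_def by (rule infsum_cmult_right')
    finally show ?thesis .
  qed
  have munn: "mu_set \<mu> B x \<ge> 0" for B x
    unfolding mu_set_def using pos by (intro infsum_nonneg) (auto intro: less_imp_le)
  show ?thesis
  proof (intro exI[of _ C0] conjI allI impI)
    show "C0 > 0" by (rule C0pos)
    fix K :: "'a \<Rightarrow> complex" and B :: "'a set" and x :: 'a
    assume K: "schwartz K" and B: "B \<subseteq> int_lattice"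
    from K have dec: "\<And>N::nat. \<exists>M. \<forall>x. (1 + norm x) ^ N * norm (K x) \<le> M"
      and dK: "\<And>x. \<exists>f'. (K has_derivative f') (at x)"
      by (cases rule: schwartz.cases; blast)+
    have contK: "continuous_on UNIV K"
      by (intro continuous_at_imp_continuous_on ballI) (use dK has_derivative_continuous in blast)
    define h where "h y = norm (K y) * (1 + norm y ^ D)" for y :: 'a
    have hnn: "h y \<ge> 0" for y unfolding h_def by simp
    have h_int: "integrable lborel h"
    proof -
      obtain M where M: "\<And>y. (1 + norm y) ^ (D + (DIM('a) + 2)) * norm (K y) \<le> M"
        using dec[of "D + (DIM('a) + 2)"] by blast
      have bnd: "norm (h y) \<le> norm (2 * M * inverse ((1 + norm y) ^ (DIM('a) + 2)))" for y
      proof -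
        define a where "a = 1 + norm y"
        have a: "a \<ge> 1" unfolding a_def by simp
        have e: "(1 + norm y ^ D) \<le> 2 * a ^ D"
        proof -
          have "norm y ^ D \<le> a ^ D" unfolding a_def by (intro power_mono) auto
          moreover have "1 \<le> a ^ D" using a by simp
          ultimately show ?thesis by simp
        qed
        have m: "a ^ D * a ^ (DIM('a) + 2) * norm (K y) \<le> M"
          using M[of y] unfolding a_def by (simp add: power_add mult_ac)
        have ap: "a ^ (DIM('a) + 2) > 0" using a by simp
        have "h y \<le> norm (K y) * (2 * a ^ D)"
          unfolding h_def using e by (intro mult_left_mono) auto
        also have "\<dots> = 2 * (a ^ D * a ^ (DIM('a) + 2) * norm (K y)) * inverse (a ^ (DIM('a) + 2))"
          using ap a by (simp add: field_simps)
        also have "\<dots> \<le> 2 * M * inverse (a ^ (DIM('a) + 2))"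
          using m ap by (intro mult_right_mono) (auto simp del: power_Suc inverse_mult_distrib)
        finally have "h y \<le> 2 * M * inverse (a ^ (DIM('a) + 2))" .
        thus ?thesis using hnn[of y] unfolding a_def by simp
      qed
      show ?thesis
      proof (rule Bochner_Integration.integrable_bound)
        show "integrable lborel (\<lambda>y::'a. 2 * M * inverse ((1 + norm y) ^ (DIM('a) + 2)))"
          by (intro integrable_mult_right decay_integrable)
        show "h \<in> borel_measurable lborel" unfolding measurable_lborel2 h_def
          by (intro borel_measurable_continuous_onI continuous_intros contK)
        show "AE y in lborel. norm (h y) \<le> norm (2 * M * inverse ((1 + norm y) ^ (DIM('a) + 2)))"
          using bnd by simp
      qed
    qed
    define f where "f y = K y * complex_of_real (mu_set \<mu> B (x - y))" for y
    have convf: "conv K (mu_set \<mu> B) x = integral\<^sup>L lborel f"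
      unfolding conv_def f_def ..
    have hD: "(\<lambda>y. norm (K y) * (1 + norm y ^ (10 * DIM('a)))) = h"
      unfolding h_def D_def ..
    have rhs: "C0 * integral\<^sup>L lborel h * mu_set \<mu> B x \<ge> 0"
    proof -
      have "integral\<^sup>L lborel h \<ge> 0" by (rule integral_nonneg_AE) (simp add: hnn)
      thus ?thesis using C0pos munn[of B x] by simp
    qed
    have main: "norm (integral\<^sup>L lborel f) \<le> C0 * integral\<^sup>L lborel h * mu_set \<mu> B x"
    proof (cases "integrable lborel f")
      case True
      have "norm (integral\<^sup>L lborel f) \<le> (\<integral>y. norm (f y) \<partial>lborel)"
        by (rule integral_norm_bound)
      also have "\<dots> \<le> (\<integral>y. h y * (C0 * mu_set \<mu> B x) \<partial>lborel)"
      proof (rule integral_mono)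
        show "integrable lborel (\<lambda>y. norm (f y))" using True by (rule integrable_norm)
        show "integrable lborel (\<lambda>y. h y * (C0 * mu_set \<mu> B x))"
          using h_int by (rule integrable_mult_left)
        fix y
        have "norm (f y) = norm (K y) * mu_set \<mu> B (x - y)"
          unfolding f_def using munn[of B "x - y"] by (simp add: norm_mult)
        also have "\<dots> \<le> norm (K y) * (C0 * (1 + norm y ^ D) * mu_set \<mu> B x)"
          using musum[OF B, of x y] by (intro mult_left_mono) auto
        also have "\<dots> = h y * (C0 * mu_set \<mu> B x)" unfolding h_def by (simp add: mult_ac)
        finally show "norm (f y) \<le> h y * (C0 * mu_set \<mu> B x)" .
      qed
      also have "\<dots> = C0 * integral\<^sup>L lborel h * mu_set \<mu> B x"
        by (simp add: mult_ac)
      finally show ?thesis .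
    next
      case False
      thus ?thesis using rhs by (simp add: not_integrable_integral_eq)
    qed
    show "norm (conv K (mu_set \<mu> B) x)
             \<le> C0 * (\<integral>y. norm (K y) * (1 + norm y ^ (10 * DIM('a))) \<partial>lborel) * mu_set \<mu> B x"
      unfolding hD convf by (rule main)
  qed
qed

end
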